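(* For a thermodynamic Stephani universe with $\dot R\neq0$, $b'(R)\neq0$ and $a(R)\neq0$, one has $$\pi=\frac p\rho=\frac{a(R)\,(1+b w)}{1+(b-Rb')w}-1,$$ and the indicatrix $\chi=u(p)/u(\rho)$ is $$\chi=\pi+\frac13+\frac13(\pi+1)\big[(\pi+1)A_1(R)+A_2(R)\big],\qquad A_1=-\frac{Rb''}{a^2b'},\quad A_2=\frac{Rb''}{ab'}-\frac{a'R}{a^2}-\frac1a .$$ Consequently (since $\rho$ is a function of $R$), $c_s^2=\chi(\rho,p)=\pi+\frac13+\frac13(\pi+1)[(\pi+1)A_1(\rho)+A_2(\rho)]$ for two real functions $A_1(\rho),A_2(\rho)$.
   Context: Thermodynamic Stephani universe: $ds^2=-\alpha^2dt^2+\Omega^2(dx^2+dy^2+dz^2)$ with $L=R(t)/(1+b(t)w)$, $\Omega=\frac{w}{2z}L$, $\alpha=R\,\partial_R\ln L$, $w=2z/(1+\frac\varepsilon4 r^2)$, $r^2=x^2+y^2+z^2$, $\varepsilon\in\{0,\pm1\}$, $R(t),b(t)$ arbitrary; functions of $t$ are regarded as functions of $R$ and a prime denotes $d/dR$; thus $\alpha=\frac{1+(b-Rb')w}{1+bw}$. Fluid velocity $u=\alpha^{-1}\partial_t$, $\rho=\frac{3}{R^2}(\dot R^2+\varepsilon-4b^2)$, $p=-\rho-\frac R3\frac{\rho'(R)}{\alpha}$, and $a(R)\equiv-\frac{R\rho'(R)}{3\rho}$. *)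

theory Defs
  imports "HOL-Analysis.Analysis"
begin

text \<open>Thermodynamic Stephani universe. Functions of t are regarded as
functions of R; b and rho are functions of R, a prime is d/dR (deriv).
Rt is the scale factor R(t).\<close>

definition stephani_w :: "real \<Rightarrow> real \<Rightarrow> real \<Rightarrow> real \<Rightarrow> real" where
  "stephani_w \<epsilon> x y z = 2 * z / (1 + \<epsilon> / 4 * (x^2 + y^2 + z^2))"

definition stephani_alpha :: "(real \<Rightarrow> real) \<Rightarrow> real \<Rightarrow> real \<Rightarrow> real" where
  "stephani_alpha b R w = (1 + (b R - R * deriv b R) * w) / (1 + b R * w)"

definition stephani_p :: "(real \<Rightarrow> real) \<Rightarrow> (real \<Rightarrow> real) \<Rightarrow> real \<Rightarrow> real \<Rightarrow> real" where
  "stephani_p rho b R w = - rho R - R / 3 * deriv rho R / stephani_alpha b R w"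

definition stephani_a :: "(real \<Rightarrow> real) \<Rightarrow> real \<Rightarrow> real" where
  "stephani_a rho R = - R * deriv rho R / (3 * rho R)"

definition stephani_A1 :: "(real \<Rightarrow> real) \<Rightarrow> (real \<Rightarrow> real) \<Rightarrow> real \<Rightarrow> real" where
  "stephani_A1 rho b R =
     - R * deriv (deriv b) R / ((stephani_a rho R)^2 * deriv b R)"

definition stephani_A2 :: "(real \<Rightarrow> real) \<Rightarrow> (real \<Rightarrow> real) \<Rightarrow> real \<Rightarrow> real" where
  "stephani_A2 rho b R =
     R * deriv (deriv b) R / (stephani_a rho R * deriv b R)
     - deriv (stephani_a rho) R * R / (stephani_a rho R)^2
     - 1 / stephani_a rho R"

text \<open>Action of the fluid velocity u = alpha^{-1} d/dt on a scalar whose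
dependence on t (at a fixed spatial point) is F.\<close>
definition fluid_u :: "real \<Rightarrow> (real \<Rightarrow> real) \<Rightarrow> real \<Rightarrow> real" where
  "fluid_u alph F t = deriv F t / alph"

end

theory Submission
  imports Defs
begin

lemma alg:
  fixes r \<rho> \<rho>1 \<rho>2 B B1 B2 w :: real
  assumes nz: "r \<noteq> 0" "\<rho> \<noteq> 0" "\<rho>1 \<noteq> 0" "B1 \<noteq> 0" "1 + B*w \<noteq> 0" "1 + (B - r*B1)*w \<noteq> 0"
  defines "al \<equiv> (1 + (B - r*B1)*w)/(1+B*w)"
  defines "al1 \<equiv> ((- r*B2)*w*(1+B*w) - (1 + (B - r*B1)*w)*(B1*w))/(1+B*w)^2"
  defines "a \<equiv> - r*\<rho>1/(3*\<rho>)"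
  defines "a1 \<equiv> - ((\<rho>1 + r*\<rho>2)*(3*\<rho>) - r*\<rho>1*(3*\<rho>1))/(3*\<rho>)^2"
  defines "p \<equiv> - \<rho> - r/3*\<rho>1/al"
  defines "P1 \<equiv> - \<rho>1 - (((1/3)*\<rho>1 + r/3*\<rho>2)*al - r/3*\<rho>1*al1)/al^2"
  defines "pr \<equiv> p/\<rho>"
  shows "P1/\<rho>1 = pr + 1/3 + 1/3*(pr+1)*((pr+1)*(- r*B2/(a^2*B1)) + (r*B2/(a*B1) - a1*r/a^2 - 1/a))"
proof -
  define N where "N = 1 + B*w"
  define D where "D = 1 + (B - r*B1)*w"
  define \<beta> where "\<beta> = N/D"
  define k where "k = B2/B1"
  have anz: "a \<noteq> 0" using nz unfolding a_def by auto
  have Nn: "N \<noteq> 0" "D \<noteq> 0" using nz unfolding N_def D_def by auto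
  have bnz: "\<beta> \<noteq> 0" using Nn unfolding \<beta>_def by auto
  have al: "al = 1/\<beta>" unfolding al_def \<beta>_def N_def D_def by simp
  have al1: "al1 = (1-\<beta>)*(1 + \<beta>*r*k)/(r*\<beta>^2)"
  proof -
    have e1: "B1*w = (N-D)/r" unfolding N_def D_def using nz by (simp add: field_simps)
    have e2: "B2*w = k*(N-D)/r" unfolding k_def using e1 nz
      by (metis (no_types, opaque_lifting) mult.commute nonzero_mult_div_cancel_left times_divide_eq_right mult.assoc)
    have "al1 = ((- r)*(B2*w)*N - D*(B1*w))/N^2" unfolding al1_def N_def D_def by (simp add: algebra_simps)
    also have "\<dots> = (D-N)*(D+N*r*k)/(r*N^2)" unfolding e1 e2 using nz Nn by (simp add: field_simps)
    also have "\<dots> = (1-\<beta>)*(1 + \<beta>*r*k)/(r*\<beta>^2)" unfolding \<beta>_def using nz Nn by (simp add: field_simps power2_eq_square)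
    finally show ?thesis .
  qed
  have r1: "\<rho>1 = -3*a*\<rho>/r" unfolding a_def using nz by (simp add: field_simps)
  have r2: "\<rho>1 + r*\<rho>2 = -3*\<rho>*a1 + r*\<rho>1^2/\<rho>" unfolding a1_def using nz by (simp add: field_simps power2_eq_square)
  have P1: "P1 = - \<rho>1 - (\<rho>1 + r*\<rho>2)/3*\<beta> + r/3*\<rho>1*al1*\<beta>^2"
    unfolding P1_def al using bnz by (simp add: field_simps power2_eq_square)
  have pr: "pr = a*\<beta> - 1" unfolding pr_def p_def al a_def using nz bnz by (simp add: field_simps)
  have "P1/\<rho>1 = (- \<rho>1 - (-3*\<rho>*a1 + r*\<rho>1^2/\<rho>)/3*\<beta> + r/3*\<rho>1*((1-\<beta>)*(1 + \<beta>*r*k)/(r*\<beta>^2))*\<beta>^2)/\<rho>1"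
    unfolding P1 r2 al1 ..
  also have "\<dots> = pr + 1/3 + 1/3*(pr+1)*((pr+1)*(- r*k/(a^2)) + (r*k/(a) - a1*r/a^2 - 1/a))"
    unfolding pr r1 using nz anz bnz by (simp add: field_simps power2_eq_square) algebra?
  finally show ?thesis unfolding k_def by (simp add: field_simps)
qed

theorem mainTheorem10:
  fixes Rt b rho :: "real \<Rightarrow> real"
    and \<epsilon> x y z t0 :: real
    and T S :: "real set"
  assumes eps: "\<epsilon> \<in> {-1, 0, 1}"
    and T: "open T" "t0 \<in> T"
    and Rt_diff: "\<forall>t\<in>T. Rt differentiable (at t)"
    and Rt_pos: "\<forall>t\<in>T. Rt t > 0"
    and rho_def: "\<forall>t\<in>T. rho (Rt t)
          = 3 / (Rt t)^2 * ((deriv Rt t)^2 + \<epsilon> - 4 * (b (Rt t))^2)"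
    and S: "open S" "Rt t0 \<in> S"
    and b_diff: "\<forall>r\<in>S. b differentiable (at r)"
    and rho_diff: "\<forall>r\<in>S. rho differentiable (at r)"
    and b2_diff: "deriv b differentiable (at (Rt t0))"
    and rho2_diff: "deriv rho differentiable (at (Rt t0))"
    and Rdot: "deriv Rt t0 \<noteq> 0"
    and bprime: "deriv b (Rt t0) \<noteq> 0"
    and a_nz: "stephani_a rho (Rt t0) \<noteq> 0"
    and den1: "1 + b (Rt t0) * stephani_w \<epsilon> x y z \<noteq> 0"
    and den2: "1 + (b (Rt t0) - Rt t0 * deriv b (Rt t0)) * stephani_w \<epsilon> x y z \<noteq> 0"
  shows "(let R = Rt t0; w = stephani_w \<epsilon> x y z;
              pr = stephani_p rho b R w / rho R;
              chi = fluid_u (stephani_alpha b R w) (\<lambda>t. stephani_p rho b (Rt t) w) t0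
                  / fluid_u (stephani_alpha b R w) (\<lambda>t. rho (Rt t)) t0
          in pr = stephani_a rho R * (1 + b R * w) / (1 + (b R - R * deriv b R) * w) - 1
           \<and> chi = pr + 1/3 + 1/3 * (pr + 1) *
                   ((pr + 1) * stephani_A1 rho b R + stephani_A2 rho b R))"
  proof -
  define R where "R = Rt t0"
  define w where "w = stephani_w \<epsilon> x y z"
  define r1 where "r1 = deriv rho R"
  define r2 where "r2 = deriv (deriv rho) R"
  define b1 where "b1 = deriv b R"
  define b2 where "b2 = deriv (deriv b) R"
  define Rd where "Rd = deriv Rt t0"
  have Rnz: "R \<noteq> 0" and rnz: "rho R \<noteq> 0" and r1nz: "r1 \<noteq> 0"
    using a_nz unfolding stephani_a_def R_def r1_def by auto
  have b1nz: "b1 \<noteq> 0" using bprime unfolding b1_def R_def .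
  have Nnz: "1 + b R * w \<noteq> 0" using den1 unfolding R_def w_def .
  have Dnz: "1 + (b R - R * b1) * w \<noteq> 0" using den2 unfolding R_def w_def b1_def .
  have hr: "(rho has_real_derivative r1) (at R)"
    using rho_diff S unfolding r1_def R_def by (simp add: DERIV_deriv_iff_real_differentiable)
  have hr2: "(deriv rho has_real_derivative r2) (at R)"
    using rho2_diff unfolding r2_def R_def by (simp add: DERIV_deriv_iff_real_differentiable)
  have hb: "(b has_real_derivative b1) (at R)"
    using b_diff S unfolding b1_def R_def by (simp add: DERIV_deriv_iff_real_differentiable)
  have hb2: "(deriv b has_real_derivative b2) (at R)"
    using b2_diff unfolding b2_def R_def by (simp add: DERIV_deriv_iff_real_differentiable)
  have hRt: "(Rt has_real_derivative Rd) (at t0)"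
    using Rt_diff T unfolding Rd_def by (simp add: DERIV_deriv_iff_real_differentiable)
  define al where "al \<equiv> (1 + (b R - R*b1)*w)/(1+b R*w)"
  define al1 where "al1 \<equiv> ((- R*b2)*w*(1+b R*w) - (1 + (b R - R*b1)*w)*(b1*w))/(1+b R*w)^2"
  define P1 where "P1 \<equiv> - r1 - (((1/3)*r1 + R/3*r2)*al - R/3*r1*al1)/al^2"
  define a1 where "a1 \<equiv> - ((r1 + R*r2)*(3*rho R) - R*r1*(3*r1))/(3*rho R)^2"
  have alnz: "al \<noteq> 0" unfolding al_def using Nnz Dnz by simp
  define A where "A = (\<lambda>r. (1 + (b r - r * deriv b r) * w) / (1 + b r * w))"
  have hal: "(A has_real_derivative al1) (at R)"
    unfolding al1_def A_def
    apply (rule derivative_eq_intros hb hb2 refl)+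
    using Nnz apply simp
    by (simp add: b1_def power2_eq_square algebra_simps)
  have hP: "((\<lambda>r. stephani_p rho b r w) has_real_derivative P1) (at R)"
  proof -
    have e: "(\<lambda>r. stephani_p rho b r w) = (\<lambda>r. - rho r - r / 3 * deriv rho r / A r)"
      unfolding stephani_p_def stephani_alpha_def A_def by simp
    have AR: "A R = al" unfolding A_def al_def b1_def ..
    show ?thesis unfolding e P1_def
      apply (rule derivative_eq_intros hr hr2 hal refl | (use alnz AR in \<open>simp; fail\<close>))+
      by (simp add: AR r1_def power2_eq_square)
  qed
  have ha: "(stephani_a rho has_real_derivative a1) (at R)"
  proof -
    have e: "stephani_a rho = (\<lambda>r. - r * deriv rho r / (3 * rho r))"
      unfolding stephani_a_def by (rule ext) simp
    show ?thesis unfolding e a1_def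
      apply (rule derivative_eq_intros hr hr2 refl)+
      using rnz apply simp
      by (simp add: r1_def power2_eq_square algebra_simps)
  qed
  have dP: "deriv (\<lambda>t. stephani_p rho b (Rt t) w) t0 = P1 * Rd"
    by (rule DERIV_imp_deriv, rule DERIV_chain2[OF _ hRt]) (use hP R_def in simp)
  have dr: "deriv (\<lambda>t. rho (Rt t)) t0 = r1 * Rd"
    by (rule DERIV_imp_deriv, rule DERIV_chain2[OF _ hRt]) (use hr R_def in simp)
  have da: "deriv (stephani_a rho) R = a1" by (rule DERIV_imp_deriv[OF ha])
  have pe: "stephani_p rho b R w = - rho R - R/3*r1/al"
    unfolding stephani_p_def stephani_alpha_def al_def r1_def b1_def ..
  have ae: "stephani_a rho R = - R*r1/(3*rho R)" unfolding stephani_a_def r1_def ..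
  have alpha: "stephani_alpha b R w = al" unfolding stephani_alpha_def al_def b1_def ..
  have Rdnz: "Rd \<noteq> 0" using Rdot unfolding Rd_def .
  have chi: "fluid_u (stephani_alpha b R w) (\<lambda>t. stephani_p rho b (Rt t) w) t0
                  / fluid_u (stephani_alpha b R w) (\<lambda>t. rho (Rt t)) t0 = P1 / r1"
    unfolding fluid_u_def dP dr alpha using alnz Rdnz r1nz by (simp add: field_simps)
  have main: "P1/r1 = stephani_p rho b R w / rho R + 1/3 + 1/3*(stephani_p rho b R w / rho R+1)*((stephani_p rho b R w / rho R+1)*(- R*b2/((stephani_a rho R)^2*b1)) + (R*b2/(stephani_a rho R*b1) - a1*R/(stephani_a rho R)^2 - 1/stephani_a rho R))"
    unfolding pe ae P1_def al_def al1_def a1_def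
    by (rule alg[OF Rnz rnz r1nz b1nz Nnz Dnz])
  have first: "stephani_p rho b R w / rho R = stephani_a rho R * (1 + b R * w) / (1 + (b R - R * b1) * w) - 1"
  proof -
    have gen: "\<And>N D. N \<noteq> 0 \<Longrightarrow> D \<noteq> 0 \<Longrightarrow> (- rho R - R/3*r1/(D/N))/rho R = (- R*r1/(3*rho R))*N/D - 1"
      using rnz by (simp add: field_simps)
    show ?thesis unfolding pe ae al_def by (rule gen[OF Nnz Dnz])
  qed
  show ?thesis
    unfolding Let_def R_def[symmetric] w_def[symmetric] chi stephani_A1_def stephani_A2_def
      da b1_def[symmetric] b2_def[symmetric]
    using main first by simp
qed

end
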